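(* Let $D$ be a strongly connected digraph with at least two vertices and girth $g$. Let $l=\min_{u\in V(D)} \lambda(u)$, where $\lambda(u)$ is the length of a longest directed path in $D$ starting at $u$. Then $\chi_A(D)\le \left\lceil\frac{l+1}{g-1}\right\rceil$.
   Context: Digraphs are finite and loopless; paths and cycles are directed. Girth is the length of a shortest directed cycle. $\chi_A(D)$ is the minimum number of colors in a vertex coloring of $D$ in which every color class induces an acyclic subdigraph. *)

theory Defs
  imports Complex_Main
begin

definition digraph :: "'a set \<Rightarrow> ('a \<times> 'a) set \<Rightarrow> bool" where
  "digraph V A \<longleftrightarrow> finite V \<and> A \<subseteq> V \<times> V \<and> (\<forall>v. (v, v) \<notin> A)"

definition dpath :: "'a set \<Rightarrow> ('a \<times> 'a) set \<Rightarrow> 'a list \<Rightarrow> bool" where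
  "dpath V A p \<longleftrightarrow> p \<noteq> [] \<and> distinct p \<and> set p \<subseteq> V \<and>
     (\<forall>i. Suc i < length p \<longrightarrow> (p ! i, p ! Suc i) \<in> A)"

definition dcycle :: "'a set \<Rightarrow> ('a \<times> 'a) set \<Rightarrow> 'a list \<Rightarrow> bool" where
  "dcycle V A c \<longleftrightarrow> length c \<ge> 2 \<and> dpath V A c \<and> (last c, hd c) \<in> A"

definition strongly_connected :: "'a set \<Rightarrow> ('a \<times> 'a) set \<Rightarrow> bool" where
  "strongly_connected V A \<longleftrightarrow> (\<forall>u\<in>V. \<forall>v\<in>V. (u, v) \<in> A\<^sup>*)"

definition girth :: "'a set \<Rightarrow> ('a \<times> 'a) set \<Rightarrow> nat" where
  "girth V A = (LEAST k. \<exists>c. dcycle V A c \<and> length c = k)"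

definition longest_path_from :: "'a set \<Rightarrow> ('a \<times> 'a) set \<Rightarrow> 'a \<Rightarrow> nat" where
  "longest_path_from V A u = Max {length p - 1 | p. dpath V A p \<and> hd p = u}"

definition acyclic_coloring :: "'a set \<Rightarrow> ('a \<times> 'a) set \<Rightarrow> nat \<Rightarrow> ('a \<Rightarrow> nat) \<Rightarrow> bool" where
  "acyclic_coloring V A k col \<longleftrightarrow> (\<forall>v\<in>V. col v < k) \<and>
     (\<forall>i. \<not> (\<exists>c. dcycle (V \<inter> {v. col v = i}) (A \<inter> ({v. col v = i} \<times> {v. col v = i})) c))"

definition dichromatic_number :: "'a set \<Rightarrow> ('a \<times> 'a) set \<Rightarrow> nat" where
  "dichromatic_number V A = (LEAST k. \<exists>col. acyclic_coloring V A k col)"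

end

theory Submission
  imports Defs
begin

lemma walk_trancl:
  "successively (\<lambda>a b. (a,b) \<in> R) (x#xs) \<Longrightarrow> z \<in> set xs \<Longrightarrow> (x,z) \<in> R\<^sup>+"
proof (induction xs arbitrary: x)
  case Nil then show ?case by simp
next
  case (Cons y ys)
  then have xy: "(x,y) \<in> R" and s: "successively (\<lambda>a b. (a,b) \<in> R) (y#ys)" by auto
  show ?case
  proof (cases "z = y")
    case True then show ?thesis using xy by auto
  next
    case False
    then have "z \<in> set ys" using Cons.prems by auto
    then have "(y,z) \<in> R\<^sup>+" using Cons.IH s by blast
    then show ?thesis using xy by (meson trancl_into_trancl2)
  qed
qed

lemma walk_distinct:
  assumes "acyclic R" shows "successively (\<lambda>a b. (a,b) \<in> R) p \<Longrightarrow> distinct p"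
proof (induction p)
  case Nil then show ?case by simp
next
  case (Cons x xs)
  have "successively (\<lambda>a b. (a,b) \<in> R) xs" using Cons.prems by (auto simp: successively_Cons)
  then have "distinct xs" using Cons.IH by blast
  moreover have "x \<notin> set xs"
  proof
    assume "x \<in> set xs"
    then have "(x,x) \<in> R\<^sup>+" using walk_trancl[OF Cons.prems] by blast
    then show False using assms by (simp add: acyclic_def)
  qed
  ultimately show ?case by simp
qed

lemma rtrancl_walk:
  assumes "(a,b) \<in> R\<^sup>*" "R \<subseteq> V \<times> V" "a \<in> V"
  shows "\<exists>p. successively (\<lambda>a b. (a,b) \<in> R) p \<and> p \<noteq> [] \<and> set p \<subseteq> V \<and> hd p = a \<and> last p = b"
  using assms(1)
proof (induction rule: rtrancl_induct)
  case base then show ?case using assms(3) by (intro exI[of _ "[a]"]) auto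
next
  case (step b c)
  then obtain p where p: "successively (\<lambda>a b. (a,b) \<in> R) p" "p \<noteq> []" "set p \<subseteq> V" "hd p = a" "last p = b" by blast
  have "c \<in> V" using step.hyps(2) assms(2) by auto
  then show ?case using p step.hyps(2)
    by (intro exI[of _ "p @ [c]"]) (auto simp: successively_append_iff)
qed

lemma walk_join:
  assumes "successively P p" "successively P q" "p \<noteq> []" "q \<noteq> []" "last p = hd q"
  shows "successively P (p @ tl q)"
proof (cases q)
  case Nil then show ?thesis using assms by simp
next
  case (Cons y q')
  then show ?thesis using assms by (auto simp: successively_append_iff successively_Cons)
qed

lemma finite_dpaths:
  assumes "finite V" shows "finite {p. dpath V A p}"
proof -
  have "{p. dpath V A p} \<subseteq> {xs. set xs \<subseteq> V \<and> length xs \<le> card V}"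
    using assms by (auto simp: dpath_def dest!: distinct_card[symmetric] intro: card_mono)
  then show ?thesis using finite_lists_length_le[OF assms] finite_subset by blast
qed

lemma exists_cross_arc:
  assumes "(a,b) \<in> A\<^sup>*" "a \<in> R" "b \<notin> R"
  shows "\<exists>x y. (x,y) \<in> A \<and> x \<in> R \<and> y \<notin> R"
  using assms
proof (induction rule: rtrancl_induct)
  case base then show ?case by simp
next
  case (step b c)
  then show ?case by (cases "b \<in> R") auto
qed

lemma rtrancl_in_V:
  assumes "(u,v) \<in> H\<^sup>*" "H \<subseteq> V \<times> V" "u \<in> V" shows "v \<in> V"
  using assms(1) by (induction rule: rtrancl_induct) (use assms in auto)

theorem mainTheorem16:
  fixes V :: "'a set" and A :: "('a \<times> 'a) set"
  assumes "digraph V A"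
    and "strongly_connected V A"
    and "card V \<ge> 2"
  shows "int (dichromatic_number V A)
           \<le> \<lceil>real ((MIN u\<in>V. longest_path_from V A u) + 1) / real (girth V A - 1)\<rceil>"
proof -
  have finV: "finite V" and AV: "A \<subseteq> V \<times> V" and loop: "\<And>v. (v,v) \<notin> A"
    using assms(1) by (auto simp: digraph_def)
  have Vne: "V \<noteq> {}" using assms(3) by auto
  have finA: "finite A" using AV finV finite_subset by blast
  define l where "l = (MIN u\<in>V. longest_path_from V A u)"
  obtain u where uV: "u \<in> V" and ul: "longest_path_from V A u = l"
  proof -
    have "l \<in> longest_path_from V A ` V" unfolding l_def using finV Vne by (intro Min_in) auto
    then show ?thesis using that by auto
  qed
  define reach where "reach H = {v. (u,v) \<in> H\<^sup>*}" for H
  have reachV: "reach H \<subseteq> V" if "H \<subseteq> A" for H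
    using rtrancl_in_V[of u _ H V] that AV uV by (auto simp: reach_def)
  have finreach: "finite (reach H)" if "H \<subseteq> A" for H
    using reachV[OF that] finV finite_subset by blast
  define S1 where "S1 = {H. H \<subseteq> A \<and> acyclic H}"
  have finS1: "finite S1" unfolding S1_def using finA by auto
  have S1ne: "{} \<in> S1" unfolding S1_def by (auto simp: acyclic_def)
  define m where "m = Max ((\<lambda>H. card (reach H)) ` S1)"
  define S2 where "S2 = {H \<in> S1. card (reach H) = m}"
  have "m \<in> (\<lambda>H. card (reach H)) ` S1" unfolding m_def using finS1 S1ne by (intro Max_in) auto
  then have "S2 \<noteq> {}" unfolding S2_def by auto
  moreover have "finite S2" using finS1 unfolding S2_def by auto
  ultimately obtain H where HS2: "H \<in> S2" and Hmax: "\<And>H'. H' \<in> S2 \<Longrightarrow> H \<subseteq> H' \<Longrightarrow> H = H'"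
    using finite_has_maximal[of S2] by blast
  have HA: "H \<subseteq> A" and acH: "acyclic H" and Hm: "card (reach H) = m"
    using HS2 unfolding S2_def S1_def by auto
  have mge: "card (reach H') \<le> m" if "H' \<in> S1" for H'
    unfolding m_def using finS1 that by (intro Max_ge) auto
  have Hmaxl: "\<not> acyclic (insert e H)" if "e \<in> A" "e \<notin> H" for e
  proof
    assume ac: "acyclic (insert e H)"
    have S1': "insert e H \<in> S1" using ac that HA unfolding S1_def by auto
    have "reach H \<subseteq> reach (insert e H)" unfolding reach_def by (auto intro: rtrancl_mono[THEN subsetD])
    then have "card (reach H) \<le> card (reach (insert e H))"
      using finreach[of "insert e H"] HA that by (intro card_mono) auto
    then have "insert e H \<in> S2" using mge[OF S1'] Hm S1' unfolding S2_def by auto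
    then have "H = insert e H" using Hmax by blast
    then show False using that by auto
  qed
  have allreach: "(u,v) \<in> H\<^sup>*" if vV: "v \<in> V" for v
  proof (rule ccontr)
    assume nv: "(u,v) \<notin> H\<^sup>*"
    have "(u,v) \<in> A\<^sup>*" using assms(2) uV vV by (auto simp: strongly_connected_def)
    moreover have "u \<in> reach H" unfolding reach_def by auto
    moreover have "v \<notin> reach H" using nv unfolding reach_def by auto
    ultimately obtain x y where xy: "(x,y) \<in> A" "x \<in> reach H" "y \<notin> reach H"
      using exists_cross_arc by metis
    define H0 where "H0 = {(a,b) \<in> H. a \<in> reach H}"
    have acH0: "acyclic H0" using acH acyclic_subset[of H H0] unfolding H0_def by auto
    have "(y,x) \<notin> H0\<^sup>*"
    proof
      assume yx: "(y,x) \<in> H0\<^sup>*"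
      have "y \<noteq> x" using xy by auto
      then have "(y,x) \<in> H0\<^sup>+" using yx by (simp add: rtrancl_eq_or_trancl)
      then obtain z where "(y,z) \<in> H0" using tranclD by metis
      then show False using xy unfolding H0_def by auto
    qed
    then have acH': "acyclic (insert (x,y) H0)" using acH0 by simp
    have S1': "insert (x,y) H0 \<in> S1" using acH' xy HA unfolding S1_def H0_def by auto
    have sub0: "(u,w) \<in> H0\<^sup>*" if "(u,w) \<in> H\<^sup>*" for w
      using that
    proof (induction rule: rtrancl_induct)
      case base then show ?case by simp
    next
      case (step b c)
      then have "(b,c) \<in> H0" unfolding H0_def reach_def by auto
      then show ?case using step.IH by (meson rtrancl.rtrancl_into_rtrancl)
    qed
    have "insert y (reach H) \<subseteq> reach (insert (x,y) H0)"
    proof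
      fix w assume "w \<in> insert y (reach H)"
      then show "w \<in> reach (insert (x,y) H0)"
      proof
        assume "w = y"
        have "(u,x) \<in> H0\<^sup>*" using sub0 xy unfolding reach_def by auto
        then have "(u,x) \<in> (insert (x,y) H0)\<^sup>*" using rtrancl_mono[of H0 "insert (x,y) H0"] by auto
        then show ?thesis using \<open>w = y\<close> unfolding reach_def
          by (meson insertI1 rtrancl.rtrancl_into_rtrancl mem_Collect_eq)
      next
        assume "w \<in> reach H"
        then have "(u,w) \<in> H0\<^sup>*" using sub0 unfolding reach_def by auto
        then show ?thesis using rtrancl_mono[of H0 "insert (x,y) H0"] unfolding reach_def by auto
      qed
    qed
    then have "card (insert y (reach H)) \<le> card (reach (insert (x,y) H0))"
      using finreach[of "insert (x,y) H0"] S1' unfolding S1_def by (intro card_mono) auto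
    moreover have "card (insert y (reach H)) = Suc m" using Hm xy finreach[OF HA] by simp
    ultimately show False using mge[OF S1'] by simp
  qed
  define E where "E = (\<lambda>a b. (a,b) \<in> H)"
  define hp where "hp v = {p. successively E p \<and> p \<noteq> [] \<and> set p \<subseteq> V \<and> hd p = u \<and> last p = v}" for v
  define h where "h v = Max ((\<lambda>p. length p - 1) ` hp v)" for v
  have hpdp: "dpath V A p" if "p \<in> hp v" for p v
    using that walk_distinct[OF acH] HA unfolding hp_def E_def dpath_def
    by (auto simp: successively_conv_nth)
  have finhp: "finite (hp v)" for v
  proof -
    have "hp v \<subseteq> {p. dpath V A p}" using hpdp by auto
    then show ?thesis using finite_dpaths[OF finV] finite_subset by blast
  qed
  have hpne: "hp v \<noteq> {}" if "v \<in> V" for v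
    using rtrancl_walk[OF allreach[OF that] _ uV] HA AV unfolding hp_def E_def by blast
  have h_ge: "length p - 1 \<le> h v" if "p \<in> hp v" for p v
    unfolding h_def using finhp that by (intro Max_ge) auto
  have h_att: "\<exists>p\<in>hp v. length p - 1 = h v" if "v \<in> V" for v
  proof -
    have "h v \<in> (\<lambda>p. length p - 1) ` hp v" unfolding h_def using finhp hpne[OF that] by (intro Max_in) auto
    then show ?thesis by auto
  qed
  have finLP: "finite {length p - 1 |p. dpath V A p \<and> hd p = u}"
  proof -
    have "{length p - 1 |p. dpath V A p \<and> hd p = u} \<subseteq> (\<lambda>p. length p - 1) ` {p. dpath V A p}" by auto
    then show ?thesis using finite_dpaths[OF finV] finite_subset by blast
  qed
  have h_le: "h v \<le> l" if vV: "v \<in> V" for v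
  proof -
    obtain p where p: "p \<in> hp v" "length p - 1 = h v" using h_att[OF vV] by blast
    have "hd p = u" using p unfolding hp_def by auto
    then have "length p - 1 \<le> longest_path_from V A u"
      unfolding longest_path_from_def using hpdp[OF p(1)] finLP by (intro Max_ge) auto
    then show ?thesis using p ul by simp
  qed
  have K: "\<exists>q. successively E q \<and> q \<noteq> [] \<and> set q \<subseteq> V \<and> hd q = y \<and> last q = x \<and> dcycle V A q"
    if "(x,y) \<in> A" "(x,y) \<notin> H" for x y
  proof -
    have "(y,x) \<in> H\<^sup>*" using Hmaxl[OF that] acH by simp
    moreover have "y \<in> V" using that AV by auto
    ultimately obtain q where q: "successively E q" "q \<noteq> []" "set q \<subseteq> V" "hd q = y" "last q = x"
      using rtrancl_walk[of y x H V] HA AV unfolding E_def by blast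
    have "x \<noteq> y" using loop that by auto
    then have "length q \<ge> 2" using q by (cases q; cases "tl q") auto
    moreover have "dpath V A q" using q walk_distinct[OF acH] HA unfolding E_def dpath_def
      by (auto simp: successively_conv_nth)
    ultimately have "dcycle V A q" using q that unfolding dcycle_def by auto
    then show ?thesis using q by blast
  qed
  define g where "g = girth V A"
  obtain a b where ab: "a \<in> V" "b \<in> V" "a \<noteq> b"
    using assms(3) card_le_Suc0_iff_eq[OF finV] by fastforce
  have "\<not> A \<subseteq> H"
  proof
    assume "A \<subseteq> H"
    then have "(a,b) \<in> H\<^sup>*" "(b,a) \<in> H\<^sup>*" using assms(2) ab rtrancl_mono[of A H]
      unfolding strongly_connected_def by auto
    then have "(a,b) \<in> H\<^sup>+" using ab by (simp add: rtrancl_eq_or_trancl)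
    then have "(a,a) \<in> H\<^sup>+" using \<open>(b,a) \<in> H\<^sup>*\<close> by (meson trancl_rtrancl_trancl)
    then show False using acH by (simp add: acyclic_def)
  qed
  then obtain x0 y0 where "(x0,y0) \<in> A" "(x0,y0) \<notin> H" by auto
  then obtain q0 where "dcycle V A q0" using K by blast
  then have "\<exists>c. dcycle V A c \<and> length c = g" unfolding g_def girth_def
    using LeastI[of "\<lambda>k. \<exists>c. dcycle V A c \<and> length c = k" "length q0"] by blast
  then have g2: "g \<ge> 2" unfolding dcycle_def by auto
  have gle: "g \<le> length q" if "dcycle V A q" for q
    unfolding g_def girth_def using that by (intro Least_le) auto
  have K2: "h y + (g - 1) \<le> h x" if xyA: "(x,y) \<in> A" "(x,y) \<notin> H" for x y
  proof -
    obtain q where q: "successively E q" "q \<noteq> []" "set q \<subseteq> V" "hd q = y" "last q = x" "dcycle V A q"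
      using K[OF xyA] by blast
    have yV: "y \<in> V" using xyA AV by auto
    obtain p where p: "p \<in> hp y" "length p - 1 = h y" using h_att[OF yV] by blast
    have lq: "length q \<ge> 2" using q unfolding dcycle_def by auto
    then obtain q' where qq: "q = y # q'" "q' \<noteq> []" using q by (cases q) (auto simp: Suc_le_eq)
    have pp: "successively E p" "p \<noteq> []" "set p \<subseteq> V" "hd p = u" "last p = y" using p unfolding hp_def by auto
    have "p @ tl q \<in> hp x"
      unfolding hp_def using walk_join[OF pp(1) q(1) pp(2) q(2)] pp q qq by (auto simp: last_append)
    then have "length (p @ tl q) - 1 \<le> h x" by (rule h_ge)
    moreover have "g \<le> length q" using gle q by auto
    moreover have "length p > 0" using pp by simp
    moreover have "length (p @ tl q) = length p + length q - 1" using qq by simp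
    ultimately show ?thesis using p(2) lq by linarith
  qed
  define d where "d = g - 1"
  have d1: "d \<ge> 1" using g2 unfolding d_def by simp
  define col where "col v = h v div d" for v
  define k where "k = l div d + 1"
  have colk: "acyclic_coloring V A k col"
    unfolding acyclic_coloring_def
  proof (intro conjI allI ballI notI)
    fix v assume "v \<in> V"
    then show "col v < k" unfolding col_def k_def using h_le div_le_mono by (simp add: le_imp_less_Suc)
  next
    fix i assume "\<exists>c. dcycle (V \<inter> {v. col v = i}) (A \<inter> {v. col v = i} \<times> {v. col v = i}) c"
    then obtain c where c: "dcycle (V \<inter> {v. col v = i}) (A \<inter> {v. col v = i} \<times> {v. col v = i}) c" by blast
    have inH: "(a,b) \<in> H" if "(a,b) \<in> A" "col a = col b" for a b
    proof (rule ccontr)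
      assume "(a,b) \<notin> H"
      then have "h b + d \<le> h a" using K2 that d_def by auto
      then have "(h b + d) div d \<le> h a div d" by (rule div_le_mono)
      then show False using that d1 unfolding col_def by simp
    qed
    have cne: "c \<noteq> []" using c unfolding dcycle_def dpath_def by auto
    have "successively E c" using c inH unfolding dcycle_def dpath_def E_def
      by (auto simp: successively_conv_nth)
    moreover have "(last c, hd c) \<in> H" using c inH unfolding dcycle_def by auto
    ultimately have "successively E (c @ [hd c])" using cne unfolding E_def
      by (auto simp: successively_append_iff)
    then have "distinct (c @ [hd c])" using walk_distinct[OF acH] unfolding E_def by blast
    then show False using cne by simp
  qed
  have "dichromatic_number V A \<le> k" unfolding dichromatic_number_def using colk by (intro Least_le) auto
  moreover have "int k \<le> \<lceil>real (l + 1) / real d\<rceil>"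
  proof -
    have "l div d * d \<le> l" by (rule div_times_less_eq_dividend)
    then have "real (l div d) * real d < real (l + 1)" by (metis of_nat_less_iff of_nat_mult le_imp_less_Suc Suc_eq_plus1)
    then have "real (l div d) < real (l + 1) / real d" using d1 by (simp add: less_divide_eq)
    then show ?thesis unfolding k_def by (simp add: le_ceiling_iff)
  qed
  ultimately show ?thesis unfolding l_def d_def g_def by linarith
qed

end
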